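(* Let $\mathcal T$ be a rooted binary phylogenetic $X$-tree. Then $|\mathcal C(\mathcal T)|\le (|X|+1)^{4c_{\mathcal T}-2}$.
   Context: A rooted binary phylogenetic $X$-tree is a rooted tree with leaf set $X$ in which the root has degree two and all other interior vertices have degree three. A cherry is a pair of leaves adjacent to a common vertex; $c_{\mathcal T}$ is the number of cherries of $\mathcal T$. For a leaf $a$, $\mathcal T[-a]$ is obtained by deleting $a$ and suppressing the resulting non-root degree-2 vertex (if the tree is a single vertex $a$, deleting it yields the empty tree $\emptyset$). The set $\mathcal C(\mathcal T)$ of cherry-picked trees of $\mathcal T$ is the smallest set of trees (leaf-labeled, up to isomorphism preserving labels) containing $\mathcal T$ and $\emptyset$ such that whenever $\mathcal T'\in\mathcal C(\mathcal T)$ and $\{a,b\}$ is a cherry of $\mathcal T'$, both $\mathcal T'[-a]$ and $\mathcal T'[-b]$ are in $\mathcal C(\mathcal T)$. *)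

theory Defs
  imports Main
begin

text \<open>A single leaf is the one-vertex tree;
  a Node is an interior vertex with exactly two children (so the root has degree
  two and every other interior vertex degree three). The empty tree is None.\<close>
datatype 'a btree = Leaf 'a | Node "'a btree" "'a btree"

fun leaf_list :: "'a btree \<Rightarrow> 'a list" where
  "leaf_list (Leaf a) = [a]"
| "leaf_list (Node l r) = leaf_list l @ leaf_list r"

definition phylo_tree :: "'a set \<Rightarrow> 'a btree \<Rightarrow> bool" where
  "phylo_tree X T \<longleftrightarrow> distinct (leaf_list T) \<and> set (leaf_list T) = X"

text \<open>Deleting leaf a and suppressing the resulting degree-2 vertex
  (deleting the only leaf yields the empty tree None).\<close>
fun del_leaf :: "'a \<Rightarrow> 'a btree \<Rightarrow> 'a btree option" where
  "del_leaf a (Leaf b) = (if a = b then None else Some (Leaf b))"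
| "del_leaf a (Node l r) =
     (case (del_leaf a l, del_leaf a r) of
        (None, None) \<Rightarrow> None
      | (None, Some r') \<Rightarrow> Some r'
      | (Some l', None) \<Rightarrow> Some l'
      | (Some l', Some r') \<Rightarrow> Some (Node l' r'))"

fun cherries :: "'a btree \<Rightarrow> 'a set set" where
  "cherries (Leaf a) = {}"
| "cherries (Node (Leaf a) (Leaf b)) = {{a, b}}"
| "cherries (Node l r) = cherries l \<union> cherries r"

definition num_cherries :: "'a btree \<Rightarrow> nat" where
  "num_cherries T = card (cherries T)"

inductive iso :: "'a btree \<Rightarrow> 'a btree \<Rightarrow> bool" where
  iso_leaf: "iso (Leaf a) (Leaf a)"
| iso_node: "iso l l' \<Longrightarrow> iso r r' \<Longrightarrow> iso (Node l r) (Node l' r')"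
| iso_swap: "iso l r' \<Longrightarrow> iso r l' \<Longrightarrow> iso (Node l r) (Node l' r')"

definition iso_opt_rel :: "('a btree option \<times> 'a btree option) set" where
  "iso_opt_rel = {(s, t). rel_option iso s t}"

inductive_set cherry_reach :: "'a btree \<Rightarrow> 'a btree option set" for T where
  cr_self: "Some T \<in> cherry_reach T"
| cr_empty: "None \<in> cherry_reach T"
| cr_pick: "Some t \<in> cherry_reach T \<Longrightarrow> {a, b} \<in> cherries t \<Longrightarrow> del_leaf a t \<in> cherry_reach T"

definition cherry_picked :: "'a btree \<Rightarrow> 'a btree option set set" where
  "cherry_picked T = cherry_reach T // iso_opt_rel"

end

theory Submission
  imports Defs
begin

lemma del_notin: "a \<notin> set (leaf_list t) \<Longrightarrow> del_leaf a t = Some t"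
  by (induction t) auto

lemma del_None: "del_leaf a t = None \<Longrightarrow> set (leaf_list t) \<subseteq> {a}"
  by (induction t) (auto split: option.splits if_splits)

lemma del_Some: "del_leaf a t = Some t' \<Longrightarrow> set (leaf_list t') \<subseteq> set (leaf_list t) \<and>
   (distinct (leaf_list t) \<longrightarrow> distinct (leaf_list t'))"
proof (induction t arbitrary: t')
  case (Leaf x) then show ?case by (auto split: if_splits)
next
  case (Node l r)
  then show ?case by (fastforce split: option.splits)
qed

lemma cherry_mem: "{a, b} \<in> cherries t \<Longrightarrow> a \<in> set (leaf_list t) \<and> b \<in> set (leaf_list t) \<and>
   (distinct (leaf_list t) \<longrightarrow> a \<noteq> b)"
  by (induction t rule: cherries.induct) (auto simp: doubleton_eq_iff)

lemma cherries_Node: "\<not> (\<exists>x y. l = Leaf x \<and> r = Leaf y) \<Longrightarrow> cherries (Node l r) = cherries l \<union> cherries r"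
  by (cases l; cases r) auto

lemma reach_inv: "x \<in> cherry_reach T \<Longrightarrow> distinct (leaf_list T) \<Longrightarrow>
   pred_option (\<lambda>t. distinct (leaf_list t) \<and> set (leaf_list t) \<subseteq> set (leaf_list T)) x"
proof (induction rule: cherry_reach.induct)
  case cr_self then show ?case by simp
next
  case cr_empty then show ?case by simp
next
  case (cr_pick t a b)
  then show ?case
    by (cases "del_leaf a t") (use del_Some in fastforce)+
qed

definition R :: "'a btree \<Rightarrow> 'a btree set" where
  "R t = {t'. Some t' \<in> cherry_reach t}"

lemma reach_Leaf: "x \<in> cherry_reach (Leaf a) \<Longrightarrow> x \<in> {Some (Leaf a), None}"
  by (induction rule: cherry_reach.induct) auto

lemma reach_Node:
  assumes d: "distinct (leaf_list (Node l r))"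
  shows "x \<in> cherry_reach (Node l r) \<Longrightarrow>
    x \<in> {None} \<union> Some ` ((\<lambda>(x, y). Node x y) ` (R l \<times> R r) \<union> Leaf ` set (leaf_list (Node l r)))"
proof (induction rule: cherry_reach.induct)
  case cr_self then show ?case by (auto simp: R_def intro: cherry_reach.intros)
next
  case cr_empty then show ?case by simp
next
  case (cr_pick t a b)
  have dt: "distinct (leaf_list t)" and st: "set (leaf_list t) \<subseteq> set (leaf_list (Node l r))"
    using reach_inv[OF cr_pick.hyps(1) d] by auto
  from cr_pick.IH consider (N) l' r' where "t = Node l' r'" "l' \<in> R l" "r' \<in> R r"
    | (L) y where "t = Leaf y" by auto
  then show ?case
  proof cases
    case L then show ?thesis using cr_pick.hyps(2) by simp
  next
    case N
    show ?thesis
    proof (cases "\<exists>x y. l' = Leaf x \<and> r' = Leaf y")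
      case True
      then obtain x y where xy: "l' = Leaf x" "r' = Leaf y" by auto
      have "x \<noteq> y" using dt N xy by simp
      moreover have "{a,b} = {x,y}" using cr_pick.hyps(2) N xy by simp
      ultimately show ?thesis using N xy st by (auto simp: doubleton_eq_iff)
    next
      case False
      then have "{a,b} \<in> cherries l' \<or> {a,b} \<in> cherries r'"
        using cherries_Node cr_pick.hyps(2) N by auto
      then show ?thesis
      proof
        assume c: "{a,b} \<in> cherries l'"
        have dl: "distinct (leaf_list l')" using dt N by simp
        from cherry_mem[OF c] dl have ab: "a \<in> set (leaf_list l')" "b \<in> set (leaf_list l')" "a \<noteq> b" by auto
        have "a \<notin> set (leaf_list r')" using dt N ab by auto
        then have r1: "del_leaf a r' = Some r'" by (rule del_notin)
        obtain l'' where l1: "del_leaf a l' = Some l''"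
          using del_None[of a l'] ab by (cases "del_leaf a l'") auto
        have "Some l' \<in> cherry_reach l" using N by (simp add: R_def)
        then have "del_leaf a l' \<in> cherry_reach l" using c by (rule cherry_reach.cr_pick)
        then have "l'' \<in> R l" using l1 by (simp add: R_def)
        then show ?thesis using N l1 r1 by auto
      next
        assume c: "{a,b} \<in> cherries r'"
        have dl: "distinct (leaf_list r')" using dt N by simp
        from cherry_mem[OF c] dl have ab: "a \<in> set (leaf_list r')" "b \<in> set (leaf_list r')" "a \<noteq> b" by auto
        have "a \<notin> set (leaf_list l')" using dt N ab by auto
        then have r1: "del_leaf a l' = Some l'" by (rule del_notin)
        obtain r'' where l1: "del_leaf a r' = Some r''"
          using del_None[of a r'] ab by (cases "del_leaf a r'") auto
        have "Some r' \<in> cherry_reach r" using N by (simp add: R_def)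
        then have "del_leaf a r' \<in> cherry_reach r" using c by (rule cherry_reach.cr_pick)
        then have "r'' \<in> R r" using l1 by (simp add: R_def)
        then show ?thesis using N l1 r1 by auto
      qed
    qed
  qed
qed

fun f :: "'a btree \<Rightarrow> nat" where
  "f (Leaf a) = 1"
| "f (Node l r) = f l * f r + length (leaf_list (Node l r))"

lemma R_count: "distinct (leaf_list t) \<Longrightarrow> finite (R t) \<and> card (R t) \<le> f t"
proof (induction t)
  case (Leaf a)
  have "R (Leaf a) \<subseteq> {Leaf a}" using reach_Leaf[of _ a] by (fastforce simp: R_def)
  moreover have "card {Leaf a} = 1" by simp
  ultimately show ?case using card_mono[of "{Leaf a}" "R (Leaf a)"] finite_subset[of "R (Leaf a)" "{Leaf a}"] by simp
next
  case (Node l r)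
  let ?A = "(\<lambda>(x, y). Node x y) ` (R l \<times> R r)"
  let ?B = "Leaf ` set (leaf_list (Node l r))"
  have il: "finite (R l)" "card (R l) \<le> f l" and ir: "finite (R r)" "card (R r) \<le> f r"
    using Node by auto
  have sub: "R (Node l r) \<subseteq> ?A \<union> ?B"
    using reach_Node[OF Node.prems] by (auto simp: R_def)
  have fin: "finite (?A \<union> ?B)" using il ir by auto
  have "card (?A \<union> ?B) \<le> card ?A + card ?B" by (rule card_Un_le)
  also have "card ?A \<le> card (R l \<times> R r)" by (rule card_image_le) (use il ir in auto)
  also have "card (R l \<times> R r) = card (R l) * card (R r)" by (rule card_cartesian_product)
  also have "\<dots> \<le> f l * f r" using il ir by (simp add: mult_le_mono)
  also have "card ?B \<le> card (set (leaf_list (Node l r)))" by (rule card_image_le) simp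
  also have "\<dots> \<le> length (leaf_list (Node l r))" by (rule card_length)
  finally have "card (?A \<union> ?B) \<le> f (Node l r)" by simp
  moreover have "card (R (Node l r)) \<le> card (?A \<union> ?B)" by (rule card_mono[OF fin sub])
  ultimately show ?case using finite_subset[OF sub fin] by simp
qed

fun cc :: "'a btree \<Rightarrow> nat" where
  "cc (Leaf a) = 0"
| "cc (Node (Leaf a) (Leaf b)) = 1"
| "cc (Node l r) = cc l + cc r"

lemma cherries_sub: "s \<in> cherries t \<Longrightarrow> s \<noteq> {} \<and> s \<subseteq> set (leaf_list t)"
  by (induction t rule: cherries.induct) auto

lemma cc_Node: "\<not> (\<exists>x y. l = Leaf x \<and> r = Leaf y) \<Longrightarrow> cc (Node l r) = cc l + cc r"
  by (cases l; cases r) auto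

lemma cc_card: "distinct (leaf_list t) \<Longrightarrow> finite (cherries t) \<and> card (cherries t) = cc t"
proof (induction t)
  case (Leaf a) then show ?case by simp
next
  case (Node l r)
  show ?case
  proof (cases "\<exists>x y. l = Leaf x \<and> r = Leaf y")
    case True then show ?thesis by auto
  next
    case False
    have "cherries l \<inter> cherries r = {}"
      using cherries_sub[of _ l] cherries_sub[of _ r] Node.prems by fastforce
    then show ?thesis using Node False by (simp add: card_Un_disjoint cherries_Node cc_Node)
  qed
qed

lemma pow_ineq:
  fixes x k :: nat
  assumes x1: "x \<ge> 1" and k2: "k \<ge> 2"
  shows "x ^ k + x + 1 \<le> (x + 1) ^ k"
  using k2
proof (induction k rule: dec_induct)
  case base then show ?case by (simp add: power2_eq_square algebra_simps)
next
  case (step k)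
  have "x ^ Suc k + x + 1 \<le> (x + 1) * (x ^ k + x + 1)"
    using x1 by (simp add: algebra_simps)
  also have "\<dots> \<le> (x + 1) * (x + 1) ^ k" using step.IH by (rule mult_le_mono2)
  finally show ?case by simp
qed

lemma arith: "(\<forall>a. t \<noteq> Leaf a) \<Longrightarrow>
   1 \<le> cc t \<and> f t + length (leaf_list t) \<le> (length (leaf_list t) + 1) ^ (4 * cc t - 2)"
proof (induction t)
  case (Leaf x) then show ?case by simp
next
  case (Node l r)
  show ?case
  proof (cases "\<exists>a. l = Leaf a")
    case True
    then obtain a where a: "l = Leaf a" by auto
    show ?thesis
    proof (cases "\<exists>b. r = Leaf b")
      case True
      then obtain b where "r = Leaf b" by auto
      then show ?thesis using a by (simp add: power2_eq_square)
    next
      case False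
      then obtain u v where r: "r = Node u v" by (cases r) auto
      have IH: "1 \<le> cc r" "f r + length (leaf_list r) \<le> (length (leaf_list r) + 1) ^ (4 * cc r - 2)"
        using Node.IH(2) False by auto
      have ccE: "cc (Node l r) = cc r" using a r by simp
      define x where "x = length (leaf_list r) + 1"
      define k where "k = 4 * cc r - 2"
      have "f (Node l r) + length (leaf_list (Node l r)) = f r + length (leaf_list r) + x + 1"
        using a by (simp add: x_def)
      also have "\<dots> \<le> x ^ k + x + 1" using IH by (simp add: x_def k_def)
      also have "\<dots> \<le> (x + 1) ^ k" by (rule pow_ineq) (use IH in \<open>auto simp: x_def k_def\<close>)
      finally show ?thesis using ccE IH a by (simp add: x_def k_def)
    qed
  next
    case False
    then obtain u v where l: "l = Node u v" by (cases l) auto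
    show ?thesis
    proof (cases "\<exists>b. r = Leaf b")
      case True
      then obtain b where rb: "r = Leaf b" by auto
      have IH: "1 \<le> cc l" "f l + length (leaf_list l) \<le> (length (leaf_list l) + 1) ^ (4 * cc l - 2)"
        using Node.IH(1) False by auto
      have ccE: "cc (Node l r) = cc l" using l rb by simp
      define x where "x = length (leaf_list l) + 1"
      define k where "k = 4 * cc l - 2"
      have "f (Node l r) + length (leaf_list (Node l r)) = f l + length (leaf_list l) + x + 1"
        using rb by (simp add: x_def)
      also have "\<dots> \<le> x ^ k + x + 1" using IH by (simp add: x_def k_def)
      also have "\<dots> \<le> (x + 1) ^ k" by (rule pow_ineq) (use IH in \<open>auto simp: x_def k_def\<close>)
      finally show ?thesis using ccE IH rb by (simp add: x_def k_def add.commute)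
    next
      case False2: False
      then obtain p q where r: "r = Node p q" by (cases r) auto
      have IHl: "1 \<le> cc l" "f l + length (leaf_list l) \<le> (length (leaf_list l) + 1) ^ (4 * cc l - 2)"
        using Node.IH(1) False by auto
      have IHr: "1 \<le> cc r" "f r + length (leaf_list r) \<le> (length (leaf_list r) + 1) ^ (4 * cc r - 2)"
        using Node.IH(2) False2 by auto
      have ccE: "cc (Node l r) = cc l + cc r" using l r by simp
      define n where "n = length (leaf_list (Node l r))"
      define kl where "kl = 4 * cc l - 2"
      define kr where "kr = 4 * cc r - 2"
      have kE: "4 * cc (Node l r) - 2 = kl + kr + 2" using ccE IHl IHr by (simp add: kl_def kr_def)
      have "f l \<le> (length (leaf_list l) + 1) ^ kl" using IHl by (simp add: kl_def)
      also have "\<dots> \<le> (n + 1) ^ kl" by (rule power_mono) (auto simp: n_def)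
      finally have fl: "f l \<le> (n + 1) ^ kl" .
      have "f r \<le> (length (leaf_list r) + 1) ^ kr" using IHr by (simp add: kr_def)
      also have "\<dots> \<le> (n + 1) ^ kr" by (rule power_mono) (auto simp: n_def)
      finally have fr: "f r \<le> (n + 1) ^ kr" .
      define P where "P = (n + 1) ^ kl * (n + 1) ^ kr"
      have P1: "P \<ge> 1" by (simp add: P_def)
      have "f (Node l r) + length (leaf_list (Node l r)) = f l * f r + 2 * n"
        by (simp add: n_def)
      also have "\<dots> \<le> P + 2 * n" using fl fr by (simp add: P_def mult_le_mono)
      also have "\<dots> \<le> P * (n + 1) ^ 2"
      proof -
        have "P + 2 * n \<le> P + P * (2 * n)" using P1 by simp
        also have "\<dots> \<le> P * (n + 1) ^ 2" by (simp add: power2_eq_square algebra_simps)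
        finally show ?thesis .
      qed
      also have "\<dots> = (n + 1) ^ (kl + kr + 2)" by (simp only: P_def power_add)
      finally show ?thesis using kE ccE IHl by (simp add: n_def)
    qed
  qed
qed

lemma quot_card: "finite A \<Longrightarrow> card (A // r) \<le> card A"
proof -
  assume "finite A"
  have "A // r = (\<lambda>x. r `` {x}) ` A" unfolding quotient_def by blast
  then show ?thesis using card_image_le[OF \<open>finite A\<close>] by simp
qed

theorem mainTheorem6:
  fixes T :: "'a btree" and X :: "'a set"
  assumes "phylo_tree X T" and "card X \<ge> 2"
  shows "card (cherry_picked T) \<le> (card X + 1) ^ (4 * num_cherries T - 2)"
proof -
  have d: "distinct (leaf_list T)" and s: "set (leaf_list T) = X"
    using assms(1) by (auto simp: phylo_tree_def)
  have n: "length (leaf_list T) = card X" using distinct_card[OF d] s by simp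
  have nl: "\<forall>a. T \<noteq> Leaf a" using n assms(2) by auto
  from R_count[OF d] have fin: "finite (R T)" and cR: "card (R T) \<le> f T" by auto
  have sub: "cherry_reach T \<subseteq> insert None (Some ` R T)"
  proof
    fix x assume x: "x \<in> cherry_reach T"
    show "x \<in> insert None (Some ` R T)"
    proof (cases x)
      case None then show ?thesis by simp
    next
      case (Some y) then show ?thesis using x by (simp add: R_def)
    qed
  qed
  have fin2: "finite (insert None (Some ` R T))" using fin by simp
  have "card (cherry_picked T) \<le> card (cherry_reach T)"
    unfolding cherry_picked_def by (rule quot_card) (rule finite_subset[OF sub fin2])
  also have "\<dots> \<le> card (insert None (Some ` R T))" by (rule card_mono[OF fin2 sub])
  also have "\<dots> \<le> Suc (card (Some ` R T))" using fin by (simp add: card_insert_if)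
  also have "\<dots> \<le> Suc (card (R T))" using card_image_le[OF fin] by simp
  also have "\<dots> \<le> f T + card X" using cR assms(2) by simp
  also have "\<dots> \<le> (card X + 1) ^ (4 * cc T - 2)" using arith[OF nl] n by simp
  also have "cc T = num_cherries T" using cc_card[OF d] by (simp add: num_cherries_def)
  finally show ?thesis .
qed

end
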